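(* Fix a countable collection of languages $\mathcal{L}$ and $\rho\in(0,1]$. Under enumerations with vanishing noise rate and arbitrary omissions, there exists a set-based generator that generates in the limit from $\mathcal{L}$ and achieves set-based lower density $\rho$ if and only if the following holds: for every non-empty finite subcollection $\mathcal{L}'\subseteq\mathcal{L}$ with $|\bigcap_{L\in\mathcal{L}'}L|=\infty$, every $L\in\mathcal{L}'$ satisfies $\mu_{\rm low}\big(\bigcap_{L''\in\mathcal{L}'}L'',\,L\big)\ge\rho$.
   Context: The universe is $U=\mathbb{N}$ with its natural order. A language is an infinite subset of $U$; a collection is a countable family of languages. For $A,B\subseteq\mathbb{N}$ with $B=\{b_1<b_2<\cdots\}$, $\mu_{\rm low}(A,B)=\liminf_n\frac1n|A\cap\{b_1,\dots,b_n\}|$. An enumeration is a sequence of distinct elements of $U$; $S_n=\{x_1,\dots,x_n\}$; the empirical noise rate is $R(L;x_{1:n})=\frac1n|\{t\le n:x_t\notin L\}|$. An enumeration of $K$ with vanishing ($o(1)$) noise rate and arbitrary omissions is a sequence in which every element of some infinite $\hat K\subseteq K$ appears exactly once and $R(\hat K;x_{1:n})\to0$. A set-based generator is a sequence of maps that, given $x_1,\dots,x_n$ (and knowledge of $\mathcal{L}$, not of $K$), outputs $A_n\subseteq U\setminus S_n$. It generates in the limit if for every $K\in\mathcal{L}$ and admissible enumeration of $K$ there is $n^\star$ with $A_n\subseteq K$ for all $n\ge n^\star$; it achieves set-based lower density $\rho$ if $\liminf_n\mu_{\rm low}(A_n,K)\ge\rho$ for every such $K$ and enumeration. *)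

theory Defs
  imports "HOL-Analysis.Analysis"
begin

text \<open>Lower density of A relative to an infinite set B = {b_1 < b_2 < ...}:
  liminf_n |A \<inter> {b_1,...,b_n}| / n. Here enumerate B is 0-indexed, so
  enumerate B ` {..<n} = {b_1,...,b_n}.\<close>
definition mu_low :: "nat set \<Rightarrow> nat set \<Rightarrow> ereal" where
  "mu_low A B = liminf (\<lambda>n. ereal (real (card (A \<inter> enumerate B ` {..<n})) / real n))"

text \<open>Empirical noise rate R(L; x_{1:n}); the enumeration is 0-indexed: x 0, ..., x (n-1).\<close>
definition noise_rate :: "nat set \<Rightarrow> (nat \<Rightarrow> nat) \<Rightarrow> nat \<Rightarrow> real" where
  "noise_rate L x n = real (card {t. t < n \<and> x t \<notin> L}) / real n"

definition admissible_enum :: "nat set \<Rightarrow> (nat \<Rightarrow> nat) \<Rightarrow> bool" where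
  "admissible_enum K x \<longleftrightarrow> inj x \<and>
     (\<exists>Kh. Kh \<subseteq> K \<and> infinite Kh \<and> Kh \<subseteq> range x \<and> (noise_rate Kh x \<longlonglongrightarrow> 0))"

text \<open>A set-based generator: maps the observed prefix [x_1,...,x_n] to A_n \<subseteq> U - S_n.\<close>
definition set_generator :: "(nat list \<Rightarrow> nat set) \<Rightarrow> bool" where
  "set_generator G \<longleftrightarrow> (\<forall>xs. G xs \<inter> set xs = {})"

definition generates_in_limit :: "nat set set \<Rightarrow> (nat list \<Rightarrow> nat set) \<Rightarrow> bool" where
  "generates_in_limit Lc G \<longleftrightarrow> (\<forall>K\<in>Lc. \<forall>x. admissible_enum K x \<longrightarrow>
      (\<exists>n0. \<forall>n\<ge>n0. G (map x [0..<n]) \<subseteq> K))"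

definition achieves_density :: "nat set set \<Rightarrow> (nat list \<Rightarrow> nat set) \<Rightarrow> real \<Rightarrow> bool" where
  "achieves_density Lc G \<rho> \<longleftrightarrow> (\<forall>K\<in>Lc. \<forall>x. admissible_enum K x \<longrightarrow>
      liminf (\<lambda>n. mu_low (G (map x [0..<n])) K) \<ge> ereal \<rho>)"

end

theory Submission
  imports Defs
begin

definition cntl :: "nat set \<Rightarrow> nat list \<Rightarrow> nat" where
  "cntl L xs = card {t. t < length xs \<and> xs ! t \<notin> L}"

definition passf :: "(nat \<Rightarrow> nat set) \<Rightarrow> nat list \<Rightarrow> nat \<Rightarrow> bool" where
  "passf f xs i \<longleftrightarrow> real (cntl (f i) xs) \<le> real (length xs) * (1/2) ^ (i+2)"

fun gr :: "(nat \<Rightarrow> bool) \<Rightarrow> (nat \<Rightarrow> nat set) \<Rightarrow> nat \<Rightarrow> nat set" where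
  "gr P f 0 = {}"
| "gr P f (Suc i) = (if P i \<and> infinite (\<Inter>(f ` insert i (gr P f i))) then insert i (gr P f i) else gr P f i)"

definition Gen :: "(nat \<Rightarrow> nat set) \<Rightarrow> nat list \<Rightarrow> nat set" where
  "Gen f xs = \<Inter>(f ` gr (passf f xs) f (length xs)) - set xs"

lemma gr_sub: "gr P f i \<subseteq> {..<i} \<inter> {j. P j}"
  by (induction i) auto

lemma gr_inf: "infinite (\<Inter>(f ` gr P f i))"
  by (induction i) auto

lemma gr_mono: "i \<le> j \<Longrightarrow> gr P f i \<subseteq> gr P f j"
proof (induction j)
  case 0 then show ?case by simp
next
  case (Suc j) then show ?case by (cases "i = Suc j") auto
qed

lemma gr_mem: "k < n \<Longrightarrow> P k \<Longrightarrow> infinite (\<Inter>(f ` insert k (gr P f k))) \<Longrightarrow> k \<in> gr P f n"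
  using gr_mono[of "Suc k" n P f] by auto

lemma geom: "(\<Sum>i<k. (1/2::real) ^ (i+2)) = 1/2 - (1/2) ^ (k+1)"
  by (induction k) auto

lemma mu_low_diff:
  assumes "finite S" "ereal \<rho> \<le> mu_low A B"
  shows "ereal \<rho> \<le> mu_low (A - S) B"
proof -
  define E where "E n = enumerate B ` {..<n}" for n
  have cardle: "real (card (A \<inter> E n)) \<le> real (card ((A - S) \<inter> E n)) + real (card S)" for n
  proof -
    have fE: "finite (E n)" unfolding E_def by simp
    have "A \<inter> E n \<subseteq> ((A - S) \<inter> E n) \<union> S" by auto
    then have "card (A \<inter> E n) \<le> card (((A - S) \<inter> E n) \<union> S)"
      by (intro card_mono) (use fE assms(1) in auto)
    also have "\<dots> \<le> card ((A - S) \<inter> E n) + card S" by (rule card_Un_le)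
    finally show ?thesis by linarith
  qed
  have MLo: "mu_low C B = liminf (\<lambda>n. ereal (real (card (C \<inter> E n)) / real n))" for C
    unfolding mu_low_def E_def by simp
  have "\<forall>\<^sub>F n in sequentially. y < ereal (real (card ((A - S) \<inter> E n)) / real n)"
    if y: "y < ereal \<rho>" for y
  proof (cases y)
    case MInf then show ?thesis by simp
  next
    case PInf then show ?thesis using y by simp
  next
    case (real y0)
    with y have y0: "y0 < \<rho>" by simp
    define z where "z = (y0 + \<rho>) / 2"
    have "ereal z < ereal \<rho>" using y0 by (simp add: z_def)
    then have "ereal z < mu_low A B" using assms(2) by (rule less_le_trans)
    then have ev1: "\<forall>\<^sub>F n in sequentially. ereal z < ereal (real (card (A \<inter> E n)) / real n)"
      unfolding MLo by (rule less_LiminfD)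
    have "(\<lambda>n. real (card S) / real n) \<longlonglongrightarrow> 0" by (rule lim_const_over_n)
    moreover have "0 < z - y0" using y0 by (simp add: z_def)
    ultimately have ev2: "\<forall>\<^sub>F n in sequentially. real (card S) / real n < z - y0"
      by (rule order_tendstoD(2))
    show ?thesis using ev1 ev2
    proof eventually_elim
      case (elim n)
      have a: "z < real (card (A \<inter> E n)) / real n" using elim(1) by simp
      have "real (card (A \<inter> E n)) / real n \<le> (real (card ((A - S) \<inter> E n)) + real (card S)) / real n"
        using cardle[of n] by (rule divide_right_mono) simp
      also have "\<dots> = real (card ((A - S) \<inter> E n)) / real n + real (card S) / real n"
        by (rule add_divide_distrib)
      finally have "y0 < real (card ((A - S) \<inter> E n)) / real n" using a elim(2) by linarith
      then show ?case using real by simp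
    qed
  qed
  then show ?thesis unfolding MLo le_Liminf_iff by blast
qed

lemma mu_low_mono:
  assumes "A \<subseteq> C"
  shows "mu_low A B \<le> mu_low C B"
  unfolding mu_low_def
proof (rule Liminf_mono, rule always_eventually, rule allI)
  fix n
  have "card (A \<inter> enumerate B ` {..<n}) \<le> card (C \<inter> enumerate B ` {..<n})"
    by (rule card_mono) (use assms in auto)
  then show "ereal (real (card (A \<inter> enumerate B ` {..<n})) / real n)
      \<le> ereal (real (card (C \<inter> enumerate B ` {..<n})) / real n)"
    by (simp add: divide_right_mono)
qed

lemma key:
  assumes adm: "admissible_enum (f k) x"
  shows "\<forall>\<^sub>F n in sequentially. k \<in> gr (passf f (map x [0..<n])) f n"
proof -
  from adm obtain Kh where ix: "inj x" and Kh: "Kh \<subseteq> f k" "noise_rate Kh x \<longlonglongrightarrow> 0"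
    unfolding admissible_enum_def by blast
  define c where "c L n = card {t. t < n \<and> x t \<notin> L}" for L n
  have cntl_eq: "cntl L (map x [0..<n]) = c L n" for L n
    unfolding cntl_def c_def by (intro arg_cong[where f=card]) auto
  have passf_eq: "passf f (map x [0..<n]) i \<longleftrightarrow> real (c (f i) n) \<le> real n * (1/2) ^ (i+2)" for n i
    unfolding passf_def cntl_eq by simp
  have small: "\<forall>\<^sub>F n in sequentially. real (c (f k) n) \<le> \<epsilon> * real n" if eps: "0 < \<epsilon>" for \<epsilon>
  proof -
    have ev1: "\<forall>\<^sub>F n in sequentially. noise_rate Kh x n < \<epsilon>"
      using Kh(2) eps by (rule order_tendstoD(2))
    have ev2: "\<forall>\<^sub>F n in sequentially. n > 0" by (rule eventually_gt_at_top)
    show ?thesis using ev1 ev2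
    proof eventually_elim
      case (elim n)
      have "c (f k) n \<le> c Kh n" unfolding c_def
        by (rule card_mono) (use Kh(1) in auto)
      moreover have "real (c Kh n) / real n < \<epsilon>" using elim(1)
        unfolding noise_rate_def c_def by simp
      then have "real (c Kh n) < \<epsilon> * real n" using elim(2) by (simp add: divide_simps)
      ultimately show ?case by linarith
    qed
  qed
  have passk: "\<forall>\<^sub>F n in sequentially. passf f (map x [0..<n]) k"
    using small[of "(1/2) ^ (k+2)"] unfolding passf_eq by (simp add: mult.commute)
  have finG: "\<forall>G\<in>Pow {..<k}. \<forall>\<^sub>F n in sequentially.
      finite (\<Inter>(f ` insert k G)) \<longrightarrow> \<not> (\<forall>i\<in>G. passf f (map x [0..<n]) i)"
  proof
    fix G assume "G \<in> Pow {..<k}"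
    then have Gk: "G \<subseteq> {..<k}" by auto
    then have fG: "finite G" using finite_subset by blast
    define M where "M = \<Inter>(f ` insert k G)"
    show "\<forall>\<^sub>F n in sequentially.
      finite (\<Inter>(f ` insert k G)) \<longrightarrow> \<not> (\<forall>i\<in>G. passf f (map x [0..<n]) i)"
    proof (cases "finite M")
      case False then show ?thesis unfolding M_def by simp
    next
      case True
      have ev2: "\<forall>\<^sub>F n in sequentially. n > 4 * card M" by (rule eventually_gt_at_top)
      have ev4: "\<forall>\<^sub>F n in sequentially. real (c (f k) n) \<le> 1/4 * real n" by (rule small) simp
      show ?thesis using ev4 ev2
      proof eventually_elim
        case (elim n)
        show ?case
        proof (intro impI notI)
          assume allp: "\<forall>i\<in>G. passf f (map x [0..<n]) i"
          have sub: "{..<n} \<subseteq> {t\<in>{..<n}. x t \<in> M} \<union> {t. t < n \<and> x t \<notin> f k}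
              \<union> (\<Union>i\<in>G. {t. t < n \<and> x t \<notin> f i})"
            unfolding M_def by auto
          have c1: "card {t\<in>{..<n}. x t \<in> M} \<le> card M"
            by (rule card_inj_on_le[OF inj_on_subset[OF ix]]) (use True in auto)
          have c3: "card (\<Union>i\<in>G. {t. t < n \<and> x t \<notin> f i}) \<le> (\<Sum>i\<in>G. c (f i) n)"
            unfolding c_def by (rule card_UN_le[OF fG])
          have "n = card {..<n}" by simp
          also have "\<dots> \<le> card ({t\<in>{..<n}. x t \<in> M} \<union> {t. t < n \<and> x t \<notin> f k}
              \<union> (\<Union>i\<in>G. {t. t < n \<and> x t \<notin> f i}))"
            by (rule card_mono[OF _ sub]) (use fG in auto)
          also have "\<dots> \<le> card ({t\<in>{..<n}. x t \<in> M} \<union> {t. t < n \<and> x t \<notin> f k})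
              + card (\<Union>i\<in>G. {t. t < n \<and> x t \<notin> f i})" by (rule card_Un_le)
          also have "\<dots> \<le> card {t\<in>{..<n}. x t \<in> M} + card {t. t < n \<and> x t \<notin> f k}
              + card (\<Union>i\<in>G. {t. t < n \<and> x t \<notin> f i})" using card_Un_le by simp
          finally have cn: "n \<le> card M + c (f k) n + (\<Sum>i\<in>G. c (f i) n)"
            using c1 c3 unfolding c_def by linarith
          have "(\<Sum>i\<in>G. real (c (f i) n)) \<le> (\<Sum>i\<in>G. real n * (1/2) ^ (i+2))"
            by (rule sum_mono) (use allp passf_eq in auto)
          also have "\<dots> \<le> (\<Sum>i<k. real n * (1/2) ^ (i+2))"
            by (rule sum_mono2) (use Gk in auto)
          also have "\<dots> = real n * (1/2 - (1/2) ^ (k+1))"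
            by (simp only: sum_distrib_left[symmetric] geom)
          also have "\<dots> \<le> real n / 2" by (simp add: algebra_simps)
          finally have s: "(\<Sum>i\<in>G. real (c (f i) n)) \<le> real n / 2" .
          from cn have "real n \<le> real (card M) + real (c (f k) n) + (\<Sum>i\<in>G. real (c (f i) n))"
            unfolding of_nat_add[symmetric] of_nat_sum[symmetric] of_nat_le_iff .
          then show False using s elim by linarith
        qed
      qed
    qed
  qed
  have evG: "\<forall>\<^sub>F n in sequentially. \<forall>G\<in>Pow {..<k}.
      finite (\<Inter>(f ` insert k G)) \<longrightarrow> \<not> (\<forall>i\<in>G. passf f (map x [0..<n]) i)"
    by (rule eventually_ball_finite) (use finG in auto)
  have evk: "\<forall>\<^sub>F n in sequentially. n > k" by (rule eventually_gt_at_top)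
  show ?thesis using passk evG evk
  proof eventually_elim
    case (elim n)
    let ?P = "passf f (map x [0..<n])"
    have "gr ?P f k \<subseteq> {..<k} \<inter> {j. ?P j}" by (rule gr_sub)
    then have "gr ?P f k \<in> Pow {..<k}" "\<forall>i\<in>gr ?P f k. ?P i" by auto
    then have "infinite (\<Inter>(f ` insert k (gr ?P f k)))" using elim(2) by blast
    then show ?case by (intro gr_mem[where P="?P"] elim(3) elim(1))
  qed
qed

theorem theorem6p11:
  fixes Lc :: "nat set set" and \<rho> :: real
  assumes "countable Lc"
    and "\<forall>L\<in>Lc. infinite L"
    and "0 < \<rho>" and "\<rho> \<le> 1"
  shows "(\<exists>G. set_generator G \<and> generates_in_limit Lc G \<and> achieves_density Lc G \<rho>) \<longleftrightarrow>
         (\<forall>L'. L' \<subseteq> Lc \<longrightarrow> L' \<noteq> {} \<longrightarrow> finite L' \<longrightarrow> infinite (\<Inter>L') \<longrightarrow>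
            (\<forall>L\<in>L'. mu_low (\<Inter>L') L \<ge> ereal \<rho>))"
proof
  assume "\<exists>G. set_generator G \<and> generates_in_limit Lc G \<and> achieves_density Lc G \<rho>"
  then obtain G where gen: "generates_in_limit Lc G" and dens: "achieves_density Lc G \<rho>" by blast
  show "\<forall>L'. L' \<subseteq> Lc \<longrightarrow> L' \<noteq> {} \<longrightarrow> finite L' \<longrightarrow> infinite (\<Inter>L') \<longrightarrow>
            (\<forall>L\<in>L'. mu_low (\<Inter>L') L \<ge> ereal \<rho>)"
  proof (intro allI impI ballI)
    fix L' L assume L': "L' \<subseteq> Lc" "L' \<noteq> {}" "finite L'" "infinite (\<Inter>L')" and L: "L \<in> L'"
    define I where "I = \<Inter>L'"
    define x where "x = enumerate I"
    have infI: "infinite I" using L'(4) I_def by simp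
    have adm: "admissible_enum L2 x" if "L2 \<in> L'" for L2
      unfolding admissible_enum_def
    proof (intro conjI exI)
      show "inj x" unfolding x_def using strict_mono_enumerate[OF infI] strict_mono_imp_inj_on by blast
      show "I \<subseteq> L2" unfolding I_def using that by blast
      show "infinite I" by (rule infI)
      show "I \<subseteq> range x" unfolding x_def using range_enumerate[OF infI] by simp
      have xI: "x t \<in> I" for t using range_enumerate[OF infI] unfolding x_def by (metis rangeI)
      have "noise_rate I x = (\<lambda>n. 0)"
        unfolding noise_rate_def using xI by (auto intro!: ext)
      then show "noise_rate I x \<longlonglongrightarrow> 0" by simp
    qed
    have ev: "\<forall>L2\<in>L'. \<forall>\<^sub>F n in sequentially. G (map x [0..<n]) \<subseteq> L2"
    proof
      fix L2 assume "L2 \<in> L'"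
      then obtain n0 where "\<forall>n\<ge>n0. G (map x [0..<n]) \<subseteq> L2"
        using gen adm L' unfolding generates_in_limit_def by blast
      then show "\<forall>\<^sub>F n in sequentially. G (map x [0..<n]) \<subseteq> L2"
        unfolding eventually_sequentially by blast
    qed
    have "\<forall>\<^sub>F n in sequentially. \<forall>L2\<in>L'. G (map x [0..<n]) \<subseteq> L2"
      by (rule eventually_ball_finite[OF L'(3) ev])
    then have "\<forall>\<^sub>F n in sequentially. mu_low (G (map x [0..<n])) L \<le> mu_low I L"
      by eventually_elim (rule mu_low_mono, auto simp: I_def)
    then have "Limsup sequentially (\<lambda>n. mu_low (G (map x [0..<n])) L) \<le> mu_low I L"
      by (rule Limsup_bounded)
    moreover have "ereal \<rho> \<le> liminf (\<lambda>n. mu_low (G (map x [0..<n])) L)"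
      using dens adm[OF L] L L' unfolding achieves_density_def by blast
    moreover have "liminf (\<lambda>n. mu_low (G (map x [0..<n])) L) \<le> limsup (\<lambda>n. mu_low (G (map x [0..<n])) L)"
      by (rule Liminf_le_Limsup) simp
    ultimately show "ereal \<rho> \<le> mu_low (\<Inter>L') L" unfolding I_def[symmetric] by (meson order.trans)
  qed
next
  assume H: "\<forall>L'. L' \<subseteq> Lc \<longrightarrow> L' \<noteq> {} \<longrightarrow> finite L' \<longrightarrow> infinite (\<Inter>L') \<longrightarrow>
            (\<forall>L\<in>L'. mu_low (\<Inter>L') L \<ge> ereal \<rho>)"
  show "\<exists>G. set_generator G \<and> generates_in_limit Lc G \<and> achieves_density Lc G \<rho>"
  proof (cases "Lc = {}")
    case True
    then show ?thesis
      unfolding set_generator_def generates_in_limit_def achieves_density_def by auto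
  next
    case False
    define f where "f = from_nat_into Lc"
    have rf: "range f = Lc" unfolding f_def using False assms(1) by (rule range_from_nat_into)
    have fk: "K \<in> Lc \<Longrightarrow> f (to_nat_on Lc K) = K" for K
      unfolding f_def using assms(1) by (rule from_nat_into_to_nat_on)
    have main: "\<forall>\<^sub>F n in sequentially. Gen f (map x [0..<n]) \<subseteq> K \<and> ereal \<rho> \<le> mu_low (Gen f (map x [0..<n])) K"
      if K: "K \<in> Lc" and adm: "admissible_enum K x" for K x
    proof -
      define k where "k = to_nat_on Lc K"
      have fkK: "f k = K" unfolding k_def using fk[OF K] .
      have "\<forall>\<^sub>F n in sequentially. k \<in> gr (passf f (map x [0..<n])) f n"
        by (rule key) (use adm fkK in simp)
      then show ?thesis
      proof eventually_elim
        case (elim n)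
        define F where "F = gr (passf f (map x [0..<n])) f n"
        have GF: "Gen f (map x [0..<n]) = \<Inter>(f ` F) - set (map x [0..<n])"
          unfolding Gen_def F_def by simp
        have kF: "k \<in> F" using elim F_def by simp
        have "f ` F \<subseteq> Lc" using rf by auto
        moreover have "f ` F \<noteq> {}" using kF by auto
        moreover have "finite (f ` F)" using gr_sub[of "passf f (map x [0..<n])" f n]
          unfolding F_def by (meson finite_imageI finite_lessThan finite_subset inf.boundedE)
        moreover have "infinite (\<Inter>(f ` F))" unfolding F_def by (rule gr_inf)
        moreover have "K \<in> f ` F" using kF fkK by auto
        ultimately have "ereal \<rho> \<le> mu_low (\<Inter>(f ` F)) K" using H by blast
        then have "ereal \<rho> \<le> mu_low (Gen f (map x [0..<n])) K"
          unfolding GF by (intro mu_low_diff) auto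
        moreover have "Gen f (map x [0..<n]) \<subseteq> K" unfolding GF using kF fkK by auto
        ultimately show ?case by simp
      qed
    qed
    show ?thesis
    proof (intro exI conjI)
      show "set_generator (Gen f)" unfolding set_generator_def Gen_def by auto
      show "generates_in_limit Lc (Gen f)" unfolding generates_in_limit_def
      proof (intro ballI allI impI)
        fix K x assume "K \<in> Lc" "admissible_enum K x"
        from main[OF this] have "\<forall>\<^sub>F n in sequentially. Gen f (map x [0..<n]) \<subseteq> K"
          by (rule eventually_mono) simp
        then show "\<exists>n0. \<forall>n\<ge>n0. Gen f (map x [0..<n]) \<subseteq> K"
          unfolding eventually_sequentially by blast
      qed
      show "achieves_density Lc (Gen f) \<rho>" unfolding achieves_density_def
      proof (intro ballI allI impI)
        fix K x assume "K \<in> Lc" "admissible_enum K x"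
        from main[OF this] have "\<forall>\<^sub>F n in sequentially. ereal \<rho> \<le> mu_low (Gen f (map x [0..<n])) K"
          by (rule eventually_mono) simp
        then show "ereal \<rho> \<le> liminf (\<lambda>n. mu_low (Gen f (map x [0..<n])) K)"
          by (rule Liminf_bounded)
      qed
    qed
  qed
qed

end
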